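(* Let $\mathcal{F}$ be a free filter on $\omega$ and let $\kappa$ be a cardinal with $\omega\le\kappa\le\mathfrak{c}$. Then $C_p(X_{\mathcal{F},\kappa})$ is homeomorphic to $(C_\mathcal{F})^\kappa$ (with the product topology).
   Context: A filter on $\omega$ is free if it contains all cofinite sets. $\mathfrak{c}=2^{\aleph_0}$. $X_{\mathcal{F},\kappa}$ is the space $(\kappa\times\omega)\cup\{\infty\}$ in which every point of $\kappa\times\omega$ is isolated and the neighborhoods of $\infty$ are the sets $\{\infty\}\cup\bigcup\{\{\alpha\}\times A_\alpha:\alpha<\kappa\}$ with $A_\alpha\in\mathcal{F}$ for all $\alpha$. $C_p(X)$ is the space of continuous real-valued functions on $X$ with the pointwise convergence topology. $C_\mathcal{F}=\{f\in(-1,1)^\omega:\forall m\in\omega\ \{n\in\omega:|f(n)|<2^{-m}\}\in\mathcal{F}\}$, a subspace of $[-1,1]^\omega$ with the product topology. *)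

theory Defs
  imports "HOL-Analysis.Analysis"
begin

text \<open>The space X_{F,kappa}: points are (kappa x omega) plus a point infinity,
  represented as the option type over 'k \<times> nat with None = infinity.\<close>
definition Xtop :: "nat filter \<Rightarrow> ('k \<times> nat) option topology" where
  "Xtop F = topology (\<lambda>U. None \<in> U \<longrightarrow> (\<forall>\<alpha>. \<forall>\<^sub>F n in F. Some (\<alpha>, n) \<in> U))"

definition Cp :: "'a topology \<Rightarrow> ('a \<Rightarrow> real) topology" where
  "Cp X = subtopology (product_topology (\<lambda>_. euclideanreal) (topspace X))
            {f \<in> extensional (topspace X). continuous_map X euclideanreal f}"

definition CF_set :: "nat filter \<Rightarrow> (nat \<Rightarrow> real) set" where
  "CF_set F = {f. (\<forall>n. f n \<in> {-1<..<1}) \<and>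
                  (\<forall>m::nat. \<forall>\<^sub>F n in F. \<bar>f n\<bar> < (1/2) ^ m)}"

definition CFtop :: "nat filter \<Rightarrow> (nat \<Rightarrow> real) topology" where
  "CFtop F = subtopology (product_topology (\<lambda>_. top_of_set {-1..1}) UNIV) (CF_set F)"

end

theory Submission
  imports Defs
begin

definition hh :: "real \<Rightarrow> real" where "hh x = x / (1 + \<bar>x\<bar>)"
definition hi :: "real \<Rightarrow> real" where "hi y = y / (1 - \<bar>y\<bar>)"

lemma hh_abs: "\<bar>hh x\<bar> = \<bar>x\<bar> / (1 + \<bar>x\<bar>)"
  unfolding hh_def by (simp add: abs_divide)

lemma hh_bound: "\<bar>hh x\<bar> < 1"
proof -
  have p: "0 < 1 + \<bar>x\<bar>" by simp
  have "\<bar>x\<bar> / (1 + \<bar>x\<bar>) < 1"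
    using p by (simp add: pos_divide_less_eq)
  then show ?thesis using hh_abs by simp
qed

lemma hi_hh: "hi (hh x) = x"
proof -
  define d where "d = 1 + \<bar>x\<bar>"
  have p: "0 < d" unfolding d_def by simp
  have "1 - \<bar>hh x\<bar> = (d - \<bar>x\<bar>) / d" unfolding hh_abs d_def[symmetric]
    using p by (simp add: diff_divide_distrib)
  also have "\<dots> = 1 / d" unfolding d_def by simp
  finally have "hi (hh x) = (x / d) / (1 / d)" unfolding hi_def by (simp add: hh_def d_def)
  also have "\<dots> = x" using p by simp
  finally show ?thesis .
qed

lemma hh_hi: assumes a: "\<bar>y\<bar> < 1" shows "hh (hi y) = y"
proof -
  define d where "d = 1 - \<bar>y\<bar>"
  have p: "0 < d" unfolding d_def using a by simp
  have "\<bar>hi y\<bar> = \<bar>y\<bar> / d" unfolding hi_def d_def[symmetric] using p by (simp add: abs_divide)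
  then have "1 + \<bar>hi y\<bar> = (d + \<bar>y\<bar>) / d" using p by (simp add: add_divide_distrib)
  also have "\<dots> = 1 / d" unfolding d_def by simp
  finally have "hh (hi y) = (y / d) / (1 / d)" unfolding hh_def by (simp add: hi_def d_def)
  also have "\<dots> = y" using p by simp
  finally show ?thesis .
qed

lemma hh0: "hh 0 = 0" and hi0: "hi 0 = 0" by (simp_all add: hh_def hi_def)

lemma isCont_hh: "isCont hh x"
proof -
  have "1 + \<bar>x\<bar> \<noteq> 0" using abs_ge_zero[of x] by linarith
  then show ?thesis unfolding hh_def[abs_def] by (intro continuous_intros) auto
qed

lemma isCont_hi: "\<bar>x\<bar> < 1 \<Longrightarrow> isCont hi x"
  unfolding hi_def[abs_def] by (intro continuous_intros) auto

lemma cmap_hh: "continuous_map euclideanreal euclideanreal hh"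
  by (simp add: continuous_on_eq_continuous_at isCont_hh)

lemma cmap_hi: "continuous_map (top_of_set {-1<..<1}) euclideanreal hi"
proof -
  have "continuous_on {-1<..<1} hi"
    by (intro continuous_at_imp_continuous_on ballI isCont_hi) auto
  then show ?thesis by simp
qed

lemma open_Xtop: "openin (Xtop F) U \<longleftrightarrow> (None \<in> U \<longrightarrow> (\<forall>\<alpha>. \<forall>\<^sub>F n in F. Some (\<alpha>, n) \<in> U))"
proof -
  let ?L = "\<lambda>U::('a \<times> nat) option set. None \<in> U \<longrightarrow> (\<forall>\<alpha>. \<forall>\<^sub>F n in F. Some (\<alpha>, n) \<in> U)"
  have i1: "\<forall>S T. ?L S \<longrightarrow> ?L T \<longrightarrow> ?L (S \<inter> T)"
  proof (intro allI impI)
    fix S T :: "('a \<times> nat) option set" and \<alpha>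
    assume S: "?L S" and T: "?L T" and N: "None \<in> S \<inter> T"
    from S N have a: "\<forall>\<^sub>F n in F. Some (\<alpha>, n) \<in> S" by blast
    from T N have b: "\<forall>\<^sub>F n in F. Some (\<alpha>, n) \<in> T" by blast
    from eventually_conj[OF a b] show "\<forall>\<^sub>F n in F. Some (\<alpha>, n) \<in> S \<inter> T"
      by simp
  qed
  have i2: "\<forall>K. (\<forall>S\<in>K. ?L S) \<longrightarrow> ?L (\<Union>K)"
  proof (intro allI impI)
    fix K :: "('a \<times> nat) option set set" and \<alpha>
    assume K: "\<forall>S\<in>K. ?L S" and "None \<in> \<Union>K"
    then obtain S where "S \<in> K" "None \<in> S" by auto
    with K have "\<forall>\<^sub>F n in F. Some (\<alpha>, n) \<in> S" by auto
    then show "\<forall>\<^sub>F n in F. Some (\<alpha>, n) \<in> \<Union>K"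
      by (rule eventually_mono) (use \<open>S \<in> K\<close> in auto)
  qed
  have "istopology ?L" unfolding istopology_def using i1 i2 by blast
  then show ?thesis unfolding Xtop_def by simp
qed

lemma topspace_Xtop: "topspace (Xtop F) = UNIV"
proof -
  have "openin (Xtop F) UNIV" by (simp add: open_Xtop)
  then show ?thesis using openin_subset by blast
qed

lemma cont_Xtop:
  "continuous_map (Xtop F) euclideanreal f \<longleftrightarrow> (\<forall>\<alpha>. ((\<lambda>n. f (Some (\<alpha>, n))) \<longlongrightarrow> f None) F)"
proof
  assume c: "continuous_map (Xtop F) euclideanreal f"
  show "\<forall>\<alpha>. ((\<lambda>n. f (Some (\<alpha>, n))) \<longlongrightarrow> f None) F"
  proof (intro allI topological_tendstoI)
    fix \<alpha> and V :: "real set" assume "open V" "f None \<in> V"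
    then have "openin (Xtop F) {x \<in> topspace (Xtop F). f x \<in> V}"
      using c by (simp add: continuous_map_def)
    then show "\<forall>\<^sub>F n in F. f (Some (\<alpha>, n)) \<in> V"
      using \<open>f None \<in> V\<close> by (simp add: open_Xtop topspace_Xtop)
  qed
next
  assume t: "\<forall>\<alpha>. ((\<lambda>n. f (Some (\<alpha>, n))) \<longlongrightarrow> f None) F"
  show "continuous_map (Xtop F) euclideanreal f"
    unfolding continuous_map_def
  proof (intro conjI allI impI)
    show "f \<in> topspace (Xtop F) \<rightarrow> topspace euclideanreal" by simp
    fix V assume "openin euclideanreal V"
    then have "open V" by simp
    show "openin (Xtop F) {x \<in> topspace (Xtop F). f x \<in> V}"
      unfolding open_Xtop topspace_Xtop
    proof (intro impI allI)
      fix \<alpha> assume "None \<in> {x \<in> UNIV. f x \<in> V}"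
      then have "f None \<in> V" by simp
      from topological_tendstoD[OF t[rule_format, of \<alpha>] \<open>open V\<close> this]
      show "\<forall>\<^sub>F n in F. Some (\<alpha>, n) \<in> {x \<in> UNIV. f x \<in> V}" by simp
    qed
  qed
qed

lemma CF_set_iff:
  "g \<in> CF_set F \<longleftrightarrow> (\<forall>n. \<bar>g n\<bar> < 1) \<and> (g \<longlongrightarrow> 0) F"
proof -
  have "(\<forall>m::nat. \<forall>\<^sub>F n in F. \<bar>g n\<bar> < (1/2) ^ m) \<longleftrightarrow> (g \<longlongrightarrow> 0) F"
  proof
    assume a: "\<forall>m::nat. \<forall>\<^sub>F n in F. \<bar>g n\<bar> < (1/2) ^ m"
    show "(g \<longlongrightarrow> 0) F"
    proof (rule tendstoI)
      fix e :: real assume "e > 0"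
      obtain m :: nat where "(1/2) ^ m < e"
        using real_arch_pow_inv[OF \<open>e > 0\<close>, of "1/2"] by auto
      then show "\<forall>\<^sub>F n in F. dist (g n) 0 < e"
        using a[rule_format, of m] by (auto elim: eventually_mono)
    qed
  next
    assume "(g \<longlongrightarrow> 0) F"
    then show "\<forall>m::nat. \<forall>\<^sub>F n in F. \<bar>g n\<bar> < (1/2) ^ m"
      by (auto dest!: tendstoD[where e="(1/2)^_"])
  qed
  then show ?thesis unfolding CF_set_def by (auto simp: abs_less_iff)
qed


lemma topspace_CFtop: "topspace (CFtop F) = CF_set F"
  unfolding CFtop_def by (auto simp: CF_set_def PiE_def extensional_def) (use less_imp_le in blast)+

lemma topspace_Cp: "topspace (Cp (Xtop F)) = {f. continuous_map (Xtop F) euclideanreal f}"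
  unfolding Cp_def by (simp add: topspace_Xtop)

lemma topspace_prodCF: "topspace (product_topology (\<lambda>_::'k. CFtop F) UNIV) = {G. \<forall>\<alpha>. G \<alpha> \<in> CF_set F}"
  by (auto simp: topspace_CFtop)

lemma proj_CF: "continuous_map (CFtop F) (top_of_set {-1<..<1}) (\<lambda>g. g n)"
proof -
  have "continuous_map (product_topology (\<lambda>_. top_of_set {-1..1}) UNIV) (top_of_set {-1..1::real}) (\<lambda>g. g n)"
    by (rule continuous_map_product_projection) simp
  then have "continuous_map (CFtop F) euclideanreal (\<lambda>g. g n)"
    unfolding CFtop_def by (intro continuous_map_from_subtopology) (rule continuous_map_into_fulltopology)
  moreover have "(\<lambda>g. g n) \<in> topspace (CFtop F) \<rightarrow> {-1<..<1}"
    by (auto simp: topspace_CFtop CF_set_def)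
  ultimately show ?thesis by (simp add: continuous_map_in_subtopology)
qed

lemma ev_Cp: "continuous_map (Cp (Xtop F)) euclideanreal (\<lambda>f. f x)"
  unfolding Cp_def
  by (intro continuous_map_from_subtopology continuous_map_product_projection) (simp add: topspace_Xtop)

lemma pr_cont: "continuous_map (product_topology (\<lambda>_::'k. CFtop F) UNIV) euclideanreal (\<lambda>G. hi (G \<alpha> n))"
proof -
  have "continuous_map (product_topology (\<lambda>_::'k. CFtop F) UNIV) (CFtop F) (\<lambda>G. G \<alpha>)"
    by (rule continuous_map_product_projection) simp
  then have "continuous_map (product_topology (\<lambda>_::'k. CFtop F) UNIV) (top_of_set {-1<..<1}) (\<lambda>G. G \<alpha> n)"
    using continuous_map_compose[OF _ proj_CF] unfolding o_def by blast
  from continuous_map_compose[OF this cmap_hi] show ?thesis unfolding o_def .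
qed

definition valf :: "(nat \<Rightarrow> 'k) \<Rightarrow> (('k \<times> nat) option \<Rightarrow> real) \<Rightarrow> 'k \<Rightarrow> nat \<Rightarrow> real" where
  "valf s f \<alpha> n = (if n = 0 \<and> \<alpha> \<in> range s then
      (if inv s \<alpha> = 0 then f None else f (Some (s (inv s \<alpha> - 1), 0)) - f None)
     else f (Some (\<alpha>, n)) - f None)"

definition Phi :: "(nat \<Rightarrow> 'k) \<Rightarrow> (('k \<times> nat) option \<Rightarrow> real) \<Rightarrow> 'k \<Rightarrow> nat \<Rightarrow> real" where
  "Phi s f = (\<lambda>\<alpha> n. hh (valf s f \<alpha> n))"

definition Psi :: "(nat \<Rightarrow> 'k) \<Rightarrow> ('k \<Rightarrow> nat \<Rightarrow> real) \<Rightarrow> ('k \<times> nat) option \<Rightarrow> real" where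
  "Psi s G = (\<lambda>p. case p of None \<Rightarrow> hi (G (s 0) 0)
     | Some (\<alpha>, n) \<Rightarrow> (if n = 0 \<and> \<alpha> \<in> range s then hi (G (s (Suc (inv s \<alpha>))) 0) else hi (G \<alpha> n))
                        + hi (G (s 0) 0))"

lemma valf_cont: "continuous_map (Cp (Xtop F)) euclideanreal (\<lambda>f. valf s f \<alpha> n)"
proof (cases "n = 0 \<and> \<alpha> \<in> range s")
  case True
  then show ?thesis
    by (cases "inv s \<alpha> = 0") (simp_all add: valf_def ev_Cp continuous_map_diff)
next
  case False
  then show ?thesis by (simp add: valf_def ev_Cp continuous_map_diff)
qed

lemma Psi_comp_cont: "continuous_map (product_topology (\<lambda>_::'k. CFtop F) UNIV) euclideanreal (\<lambda>G. Psi s G p)"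
proof (cases p)
  case None
  then show ?thesis by (simp add: Psi_def pr_cont)
next
  case (Some q)
  obtain \<alpha> n where q: "q = (\<alpha>, n)" by force
  show ?thesis
    by (cases "n = 0 \<and> \<alpha> \<in> range s") (simp_all add: Some q Psi_def pr_cont continuous_map_add)
qed

lemma ev_nz: assumes "F \<le> cofinite" shows "\<forall>\<^sub>F n in F. n \<noteq> (0::nat)"
proof -
  have "\<forall>\<^sub>F n in cofinite. n \<noteq> (0::nat)" by (simp add: eventually_cofinite)
  then show ?thesis by (rule filter_leD[OF assms])
qed

lemma Phi_in:
  assumes "F \<le> cofinite" "continuous_map (Xtop F) euclideanreal f"
  shows "Phi s f \<alpha> \<in> CF_set F"
proof -
  have t: "((\<lambda>n. f (Some (\<alpha>, n))) \<longlongrightarrow> f None) F" using assms(2) by (simp add: cont_Xtop)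
  have "((\<lambda>n. hh (f (Some (\<alpha>, n)) - f None)) \<longlongrightarrow> hh 0) F"
    by (rule isCont_tendsto_compose[OF isCont_hh LIM_zero[OF t]])
  then have a: "((\<lambda>n. hh (f (Some (\<alpha>, n)) - f None)) \<longlongrightarrow> 0) F" by (simp add: hh0)
  have ev: "\<forall>\<^sub>F n in F. hh (f (Some (\<alpha>, n)) - f None) = Phi s f \<alpha> n"
    using ev_nz[OF assms(1)] by (rule eventually_mono) (simp add: Phi_def valf_def)
  have l: "(Phi s f \<alpha> \<longlongrightarrow> 0) F" using a by (rule tendsto_cong[OF ev, THEN iffD1])
  have b: "\<forall>n. \<bar>Phi s f \<alpha> n\<bar> < 1" unfolding Phi_def using hh_bound by blast
  show ?thesis unfolding CF_set_iff using l b by (intro conjI)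
qed

lemma Psi_in:
  assumes "F \<le> cofinite" "\<forall>\<alpha>. G \<alpha> \<in> CF_set F"
  shows "continuous_map (Xtop F) euclideanreal (Psi s G)"
  unfolding cont_Xtop
proof
  fix \<alpha>
  have g: "(G \<alpha> \<longlongrightarrow> 0) F" "\<And>n. \<bar>G \<alpha> n\<bar> < 1" using assms(2) by (auto simp: CF_set_iff)
  have "((\<lambda>n. hi (G \<alpha> n)) \<longlongrightarrow> hi 0) F"
    by (rule isCont_tendsto_compose[OF isCont_hi g(1)]) simp
  then have "((\<lambda>n. hi (G \<alpha> n) + hi (G (s 0) 0)) \<longlongrightarrow> 0 + hi (G (s 0) 0)) F"
    by (intro tendsto_add) (simp_all add: hi0)
  then have a: "((\<lambda>n. hi (G \<alpha> n) + hi (G (s 0) 0)) \<longlongrightarrow> Psi s G None) F"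
    by (simp add: Psi_def)
  have ev: "\<forall>\<^sub>F n in F. hi (G \<alpha> n) + hi (G (s 0) 0) = Psi s G (Some (\<alpha>, n))"
    using ev_nz[OF assms(1)] by (rule eventually_mono) (simp add: Psi_def)
  show "((\<lambda>n. Psi s G (Some (\<alpha>, n))) \<longlongrightarrow> Psi s G None) F" using a by (rule tendsto_cong[OF ev, THEN iffD1])
qed

lemma Psi_Some: "Psi s G (Some (\<alpha>, n)) = (if n = 0 \<and> \<alpha> \<in> range s then hi (G (s (Suc (inv s \<alpha>))) 0) else hi (G \<alpha> n)) + hi (G (s 0) 0)"
  unfolding Psi_def by (simp only: option.case prod.case)

lemma Psi_None: "Psi s G None = hi (G (s 0) 0)"
  unfolding Psi_def by (simp only: option.case)

lemma Psi_Phi: assumes "inj s" shows "Psi s (Phi s f) = f"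
proof
  have v0: "valf s f (s 0) 0 = f None" by (simp add: valf_def inv_f_f[OF assms])
  have r: "hi (Phi s f (s 0) 0) = f None" by (simp add: Phi_def v0 hi_hh)
  fix p show "Psi s (Phi s f) p = f p"
  proof (cases p)
    case None
    then show ?thesis using r by (simp add: Psi_def)
  next
    case (Some q)
    obtain \<alpha> n where q: "q = (\<alpha>, n)" by force
    show ?thesis
    proof (cases "n = 0 \<and> \<alpha> \<in> range s")
      case True
      then obtain i where i: "\<alpha> = s i" "n = 0" by auto
      have "valf s f (s (Suc i)) 0 = f (Some (s i, 0)) - f None"
        by (simp add: valf_def inv_f_f[OF assms])
      then have "hi (Phi s f (s (Suc (inv s \<alpha>))) 0) = f (Some (\<alpha>, n)) - f None"
        by (simp add: i inv_f_f[OF assms] Phi_def hi_hh)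
      then show ?thesis using r unfolding Some q Psi_Some if_P[OF True] by simp
    next
      case False
      have "valf s f \<alpha> n = f (Some (\<alpha>, n)) - f None" unfolding valf_def by (rule if_not_P[OF False])
      then have "hi (Phi s f \<alpha> n) = f (Some (\<alpha>, n)) - f None"
        by (simp add: Phi_def hi_hh)
      then show ?thesis using r unfolding Some q Psi_Some if_not_P[OF False] by simp
    qed
  qed
qed

lemma Phi_Psi: assumes "inj s" "\<forall>\<alpha> n. \<bar>G \<alpha> n\<bar> < 1" shows "Phi s (Psi s G) = G"
proof (intro ext)
  fix \<alpha> n show "Phi s (Psi s G) \<alpha> n = G \<alpha> n"
  proof (cases "n = 0 \<and> \<alpha> \<in> range s")
    case True
    then obtain i where i: "\<alpha> = s i" "n = 0" by auto
    show ?thesis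
    proof (cases i)
      case 0
      then have "valf s (Psi s G) \<alpha> n = hi (G (s 0) 0)"
        using i by (simp add: valf_def inv_f_f[OF assms(1)] Psi_def)
      then show ?thesis using assms(2) i 0 by (simp add: Phi_def hh_hi)
    next
      case (Suc j)
      have "valf s (Psi s G) \<alpha> n = Psi s G (Some (s j, 0)) - Psi s G None"
        using i Suc by (simp add: valf_def inv_f_f[OF assms(1)])
      also have "\<dots> = hi (G (s (Suc j)) 0)"
        by (simp add: Psi_def inv_f_f[OF assms(1)])
      finally show ?thesis using assms(2) i Suc by (simp add: Phi_def hh_hi)
    qed
  next
    case False
    have "valf s (Psi s G) \<alpha> n = Psi s G (Some (\<alpha>, n)) - Psi s G None"
      unfolding valf_def by (rule if_not_P[OF False])
    also have "\<dots> = hi (G \<alpha> n)" unfolding Psi_Some Psi_None if_not_P[OF False] by simp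
    finally have "valf s (Psi s G) \<alpha> n = hi (G \<alpha> n)" .
    then show ?thesis using assms(2) by (simp add: Phi_def hh_hi)
  qed
qed

theorem mainTheorem16:
  fixes F :: "nat filter"
  assumes "F \<noteq> bot"
    and "F \<le> cofinite"
    and "infinite (UNIV :: 'k set)"
    and "\<exists>g :: 'k \<Rightarrow> real. inj g"
  shows "Cp (Xtop F :: ('k \<times> nat) option topology)
           homeomorphic_space product_topology (\<lambda>_::'k. CFtop F) UNIV"
proof -
  obtain s :: "nat \<Rightarrow> 'k" where s: "inj s" using infinite_countable_subset[OF assms(3)] by auto
  have c1: "continuous_map (Cp (Xtop F :: ('k \<times> nat) option topology)) (product_topology (\<lambda>_::'k. CFtop F) UNIV) (Phi s)"
    unfolding continuous_map_componentwise_UNIV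
  proof
    fix \<alpha>
    have "continuous_map (Cp (Xtop F :: ('k \<times> nat) option topology)) (product_topology (\<lambda>_. top_of_set {-1..1}) UNIV) (\<lambda>f. Phi s f \<alpha>)"
      unfolding continuous_map_componentwise_UNIV
    proof
      fix n
      have "continuous_map (Cp (Xtop F :: ('k \<times> nat) option topology)) euclideanreal (\<lambda>f. hh (valf s f \<alpha> n))"
        using continuous_map_compose[OF valf_cont cmap_hh] unfolding o_def .
      moreover have "(\<lambda>f. hh (valf s f \<alpha> n)) \<in> topspace (Cp (Xtop F :: ('k \<times> nat) option topology)) \<rightarrow> {-1..1}"
        using hh_bound by (auto simp: abs_le_iff less_imp_le abs_less_iff)
      ultimately show "continuous_map (Cp (Xtop F :: ('k \<times> nat) option topology)) (top_of_set {-1..1}) (\<lambda>f. Phi s f \<alpha> n)"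
        by (simp add: continuous_map_in_subtopology Phi_def)
    qed
    moreover have "(\<lambda>f. Phi s f \<alpha>) \<in> topspace (Cp (Xtop F :: ('k \<times> nat) option topology)) \<rightarrow> CF_set F"
      using Phi_in[OF assms(2)] by (auto simp: topspace_Cp)
    ultimately show "continuous_map (Cp (Xtop F :: ('k \<times> nat) option topology)) (CFtop F) (\<lambda>f. Phi s f \<alpha>)"
      unfolding CFtop_def by (simp add: continuous_map_in_subtopology)
  qed
  have c2: "continuous_map (product_topology (\<lambda>_::'k. CFtop F) UNIV) (Cp (Xtop F :: ('k \<times> nat) option topology)) (Psi s)"
    unfolding Cp_def topspace_Xtop continuous_map_in_subtopology
  proof
    show "continuous_map (product_topology (\<lambda>_::'k. CFtop F) UNIV) (product_topology (\<lambda>_. euclideanreal) UNIV) (Psi s)"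
      unfolding continuous_map_componentwise_UNIV by (intro allI Psi_comp_cont)
    show "Psi s \<in> topspace (product_topology (\<lambda>_::'k. CFtop F) UNIV) \<rightarrow>
        {f \<in> extensional UNIV. continuous_map (Xtop F :: ('k \<times> nat) option topology) euclideanreal f}"
    proof
      fix G assume "G \<in> topspace (product_topology (\<lambda>_::'k. CFtop F) UNIV)"
      then have "\<forall>\<alpha>. G \<alpha> \<in> CF_set F" unfolding topspace_prodCF by simp
      then show "Psi s G \<in> {f \<in> extensional UNIV. continuous_map (Xtop F :: ('k \<times> nat) option topology) euclideanreal f}"
        using Psi_in[OF assms(2)] by simp
    qed
  qed
  have i1: "\<forall>f\<in>topspace (Cp (Xtop F :: ('k \<times> nat) option topology)). Psi s (Phi s f) = f"
    using Psi_Phi[OF s] by blast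
  have i2: "\<forall>G\<in>topspace (product_topology (\<lambda>_::'k. CFtop F) UNIV). Phi s (Psi s G) = G"
  proof
    fix G assume "G \<in> topspace (product_topology (\<lambda>_::'k. CFtop F) UNIV)"
    then have "\<forall>\<alpha>. G \<alpha> \<in> CF_set F" unfolding topspace_prodCF by simp
    then have "\<forall>\<alpha> n. \<bar>G \<alpha> n\<bar> < 1" by (simp add: CF_set_iff)
    then show "Phi s (Psi s G) = G" using Phi_Psi[OF s] by blast
  qed
  show ?thesis unfolding homeomorphic_space_def homeomorphic_maps_def
    using c1 c2 i1 i2 by (intro exI[of _ "Phi s"] exI[of _ "Psi s"]) simp
qed

end
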